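(* The fixed-point set $M_{\hat\sigma}$ is nonempty only if $K\cap\bigcap_{k=1}^dW_k\neq\varnothing$. The non-degeneracy condition (D) fails at every point of $\mu^{-1}(0)$ lying over $M_{\hat\sigma}$. In particular, if $N$ acts freely and properly on $\mu^{-1}(0)$ and condition (S) holds, then $M$ is a smooth manifold but its induced hypersymplectic structure is degenerate at every point of $M_{\hat\sigma}$.
   Context: Setting: $\mathbb C^{d,d}=\mathbb C^d\times\mathbb C^d$ with coordinates $(z,w)$, $g=\mathrm{Re}\sum_k(dz_k\,d\bar z_k-dw_k\,d\bar w_k)$, $I(z,w)=(iz,-iw)$, $S(z,w)=(w,z)$, $T=IS$, $\omega_A(Y,Z)=g(Y,AZ)$; $\mathbb T^d$ acts by $(z_k,w_k)\mapsto(e^{i\theta_k}z_k,e^{i\theta_k}w_k)$. Fix $u_1,\dots,u_d\in\mathbb Z^n$ spanning $\mathbb R^n$; $\beta\colon e_k\mapsto u_k$; $\mathfrak n=\ker\beta$ with inclusion $\iota$; $N\subset\mathbb T^d$ the kernel of the induced map $\mathbb T^d\to\mathbb T^n$. Identify $\mathbb R^d$ with its dual. Fix real $\lambda^{(j)}_k$, $\lambda^{(c)}_k=\lambda^{(2)}_k+i\lambda^{(3)}_k$; $\mu_I(z,w)=\sum_k(\tfrac12(|z_k|^2+|w_k|^2)+\lambda^{(1)}_k)\iota^*e_k$, $(\mu_S+i\mu_T)(z,w)=\sum_k(iz_k\bar w_k+\lambda^{(c)}_k)\iota^*e_k$; $M=\mu^{-1}(0)/N$, with induced forms $\omega'_A$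 ($\pi^*\omega'_A=\omega_A|_{\mu^{-1}(0)}$) on its smooth part. $\phi([z,w])=(a,b)$ with $\langle a,u_k\rangle=\tfrac12(|z_k|^2+|w_k|^2)+\lambda^{(1)}_k$, $\langle b,u_k\rangle=iz_k\bar w_k+\lambda^{(c)}_k$; $a_k=\langle a,u_k\rangle-\lambda^{(1)}_k$, $b_k=\langle b,u_k\rangle-\lambda^{(c)}_k$; $K=\{a_k\geqslant|b_k|\ \forall k\}$; $W_k=\{a_k=|b_k|\}$. $\hat\sigma$ is the involution of $M$ induced by $\sigma(z,w)=(\bar w,\bar z)$ and $M_{\hat\sigma}$ its fixed-point set. Condition (D) at $p$: $\mathcal N_p\cap\mathcal N_p^\perp=\{0\}$ with $\mathcal N$ the span of the vector fields induced by $\mathfrak n$. Condition (S): at no $p\in\mu^{-1}(0)$ is there nonzero $(X_1,X_2,X_3)\in\mathfrak n^3$ with $(IX_1+SX_2+TX_3)_p=0$. *)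

theory Defs
  imports Complex_Main
begin

text \<open>Points (and tangent vectors) of C^{d,d} = C^d x C^d are pairs (z,w) of
  coordinate functions nat => complex; only indices k < d are meaningful, and the
  carrier Cdd d requires the coordinates with index >= d to vanish.
  The integer vectors u_1..u_d in Z^n are given by u :: nat => nat => int,
  u k j being the j-th coordinate of u_k (k < d, j < n).  Indices start at 0.\<close>

type_synonym pt = "(nat \<Rightarrow> complex) \<times> (nat \<Rightarrow> complex)"

definition Cdd :: "nat \<Rightarrow> pt set" where
  "Cdd d = {(z, w). \<forall>k\<ge>d. z k = 0 \<and> w k = 0}"

definition gmet :: "nat \<Rightarrow> pt \<Rightarrow> pt \<Rightarrow> real" where
  "gmet d Y Z = Re (\<Sum>k<d. fst Y k * cnj (fst Z k) - snd Y k * cnj (snd Z k))"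

definition padd :: "pt \<Rightarrow> pt \<Rightarrow> pt" where
  "padd Y Z = (\<lambda>k. fst Y k + fst Z k, \<lambda>k. snd Y k + snd Z k)"

definition Iop :: "pt \<Rightarrow> pt" where
  "Iop Y = (\<lambda>k. \<i> * fst Y k, \<lambda>k. - \<i> * snd Y k)"

definition Sop :: "pt \<Rightarrow> pt" where
  "Sop Y = (snd Y, fst Y)"

definition Top :: "pt \<Rightarrow> pt" where
  "Top Y = Iop (Sop Y)"

definition omega :: "nat \<Rightarrow> (pt \<Rightarrow> pt) \<Rightarrow> pt \<Rightarrow> pt \<Rightarrow> real" where
  "omega d A Y Z = gmet d Y (A Z)"

definition spans :: "nat \<Rightarrow> nat \<Rightarrow> (nat \<Rightarrow> nat \<Rightarrow> int) \<Rightarrow> bool" where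
  "spans d n u \<longleftrightarrow> (\<forall>y :: nat \<Rightarrow> real. \<exists>c :: nat \<Rightarrow> real.
      \<forall>j<n. (\<Sum>k<d. c k * of_int (u k j)) = y j)"

text \<open>The Lie algebra n = ker beta inside R^d.\<close>
definition nfrak :: "nat \<Rightarrow> nat \<Rightarrow> (nat \<Rightarrow> nat \<Rightarrow> int) \<Rightarrow> (nat \<Rightarrow> real) set" where
  "nfrak d n u = {\<xi>. (\<forall>k\<ge>d. \<xi> k = 0) \<and> (\<forall>j<n. (\<Sum>k<d. \<xi> k * of_int (u k j)) = 0)}"

definition Ngrp :: "nat \<Rightarrow> nat \<Rightarrow> (nat \<Rightarrow> nat \<Rightarrow> int) \<Rightarrow> (nat \<Rightarrow> complex) set" where
  "Ngrp d n u = {t. (\<forall>k. cmod (t k) = 1) \<and> (\<forall>k\<ge>d. t k = 1) \<and>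
      (\<forall>j<n. (\<Prod>k<d. t k powi u k j) = 1)}"

definition act :: "(nat \<Rightarrow> complex) \<Rightarrow> pt \<Rightarrow> pt" where
  "act t p = (\<lambda>k. t k * fst p k, \<lambda>k. t k * snd p k)"

definition Xf :: "(nat \<Rightarrow> real) \<Rightarrow> pt \<Rightarrow> pt" where
  "Xf \<xi> p = (\<lambda>k. \<i> * of_real (\<xi> k) * fst p k, \<lambda>k. \<i> * of_real (\<xi> k) * snd p k)"

text \<open>Moment maps paired with xi in n (so mu(p) = 0 in n^* iff the pairing vanishes on n).\<close>
definition muI :: "nat \<Rightarrow> (nat \<Rightarrow> real) \<Rightarrow> pt \<Rightarrow> (nat \<Rightarrow> real) \<Rightarrow> real" where
  "muI d lam1 p \<xi> = (\<Sum>k<d. ((cmod (fst p k))\<^sup>2 + (cmod (snd p k))\<^sup>2) / 2 * \<xi> k + lam1 k * \<xi> k)"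

definition muC :: "nat \<Rightarrow> (nat \<Rightarrow> complex) \<Rightarrow> pt \<Rightarrow> (nat \<Rightarrow> real) \<Rightarrow> complex" where
  "muC d lamc p \<xi> = (\<Sum>k<d. (\<i> * fst p k * cnj (snd p k) + lamc k) * of_real (\<xi> k))"

definition mu0 :: "nat \<Rightarrow> nat \<Rightarrow> (nat \<Rightarrow> nat \<Rightarrow> int) \<Rightarrow> (nat \<Rightarrow> real) \<Rightarrow> (nat \<Rightarrow> real)
    \<Rightarrow> (nat \<Rightarrow> real) \<Rightarrow> pt set" where
  "mu0 d n u lam1 lam2 lam3 = {p \<in> Cdd d. \<forall>\<xi>\<in>nfrak d n u.
      muI d lam1 p \<xi> = 0 \<and> muC d (\<lambda>k. complex_of_real (lam2 k) + \<i> * complex_of_real (lam3 k)) p \<xi> = 0}"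

definition dmuI :: "nat \<Rightarrow> pt \<Rightarrow> pt \<Rightarrow> (nat \<Rightarrow> real) \<Rightarrow> real" where
  "dmuI d p v \<xi> = (\<Sum>k<d. Re (fst p k * cnj (fst v k) + snd p k * cnj (snd v k)) * \<xi> k)"

definition dmuC :: "nat \<Rightarrow> pt \<Rightarrow> pt \<Rightarrow> (nat \<Rightarrow> real) \<Rightarrow> complex" where
  "dmuC d p v \<xi> = (\<Sum>k<d. \<i> * (fst v k * cnj (snd p k) + fst p k * cnj (snd v k)) * of_real (\<xi> k))"

definition Nsp :: "nat \<Rightarrow> nat \<Rightarrow> (nat \<Rightarrow> nat \<Rightarrow> int) \<Rightarrow> pt \<Rightarrow> pt set" where
  "Nsp d n u p = (\<lambda>\<xi>. Xf \<xi> p) ` nfrak d n u"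

definition Nperp :: "nat \<Rightarrow> nat \<Rightarrow> (nat \<Rightarrow> nat \<Rightarrow> int) \<Rightarrow> pt \<Rightarrow> pt set" where
  "Nperp d n u p = {v \<in> Cdd d. \<forall>Y\<in>Nsp d n u p. gmet d Y v = 0}"

definition condD :: "nat \<Rightarrow> nat \<Rightarrow> (nat \<Rightarrow> nat \<Rightarrow> int) \<Rightarrow> pt \<Rightarrow> bool" where
  "condD d n u p \<longleftrightarrow> Nsp d n u p \<inter> Nperp d n u p = {((\<lambda>_. 0), (\<lambda>_. 0))}"

definition condS :: "nat \<Rightarrow> nat \<Rightarrow> (nat \<Rightarrow> nat \<Rightarrow> int) \<Rightarrow> pt set \<Rightarrow> bool" where
  "condS d n u Z \<longleftrightarrow> (\<forall>p\<in>Z. \<forall>\<xi>1\<in>nfrak d n u. \<forall>\<xi>2\<in>nfrak d n u. \<forall>\<xi>3\<in>nfrak d n u.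
      padd (Iop (Xf \<xi>1 p)) (padd (Sop (Xf \<xi>2 p)) (Top (Xf \<xi>3 p))) = ((\<lambda>_. 0), (\<lambda>_. 0))
      \<longrightarrow> \<xi>1 = (\<lambda>_. 0) \<and> \<xi>2 = (\<lambda>_. 0) \<and> \<xi>3 = (\<lambda>_. 0))"

text \<open>The involution sigma and the points of mu^{-1}(0) lying over M_sigma^hat:
  [p] is fixed by sigma^hat iff sigma(p) is in the N-orbit of p.\<close>
definition sigma :: "pt \<Rightarrow> pt" where
  "sigma p = (\<lambda>k. cnj (snd p k), \<lambda>k. cnj (fst p k))"

definition over_fixed :: "nat \<Rightarrow> nat \<Rightarrow> (nat \<Rightarrow> nat \<Rightarrow> int) \<Rightarrow> pt \<Rightarrow> bool" where
  "over_fixed d n u p \<longleftrightarrow> (\<exists>t\<in>Ngrp d n u. sigma p = act t p)"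

definition acts_freely :: "nat \<Rightarrow> nat \<Rightarrow> (nat \<Rightarrow> nat \<Rightarrow> int) \<Rightarrow> pt set \<Rightarrow> bool" where
  "acts_freely d n u Z \<longleftrightarrow> (\<forall>p\<in>Z. \<forall>t\<in>Ngrp d n u. act t p = p \<longrightarrow> t = (\<lambda>_. 1))"

text \<open>0 is a regular value of mu = (mu_I, mu_S, mu_T) : C^{d,d} -> (n^*)^3 at every point of Z:
  every triple of elements of n^* (represented by vectors c_A in R^d) is attained by d mu_p.\<close>
definition regular_on :: "nat \<Rightarrow> nat \<Rightarrow> (nat \<Rightarrow> nat \<Rightarrow> int) \<Rightarrow> pt set \<Rightarrow> bool" where
  "regular_on d n u Z \<longleftrightarrow> (\<forall>p\<in>Z. \<forall>c1 c2 c3 :: nat \<Rightarrow> real. \<exists>v\<in>Cdd d. \<forall>\<xi>\<in>nfrak d n u.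
      dmuI d p v \<xi> = (\<Sum>k<d. c1 k * \<xi> k) \<and>
      Re (dmuC d p v \<xi>) = (\<Sum>k<d. c2 k * \<xi> k) \<and>
      Im (dmuC d p v \<xi>) = (\<Sum>k<d. c3 k * \<xi> k))"

text \<open>Tangent space T_p mu^{-1}(0) = ker d mu_p; T_[p] M = T_p mu^{-1}(0) / N_p.\<close>
definition Tsp :: "nat \<Rightarrow> nat \<Rightarrow> (nat \<Rightarrow> nat \<Rightarrow> int) \<Rightarrow> pt \<Rightarrow> pt set" where
  "Tsp d n u p = {v \<in> Cdd d. \<forall>\<xi>\<in>nfrak d n u. dmuI d p v \<xi> = 0 \<and> dmuC d p v \<xi> = 0}"

text \<open>The induced form omega'_A (pi^* omega'_A = omega_A restricted) is degenerate at [p]: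
  some nonzero class v mod N_p in T_p mu^{-1}(0)/N_p is omega_A-orthogonal to everything.\<close>
definition induced_degenerate :: "nat \<Rightarrow> nat \<Rightarrow> (nat \<Rightarrow> nat \<Rightarrow> int) \<Rightarrow> (pt \<Rightarrow> pt) \<Rightarrow> pt \<Rightarrow> bool" where
  "induced_degenerate d n u A p \<longleftrightarrow> (\<exists>v\<in>Tsp d n u p. v \<notin> Nsp d n u p \<and>
      (\<forall>w\<in>Tsp d n u p. omega d A v w = 0))"

end

theory Submission
  imports Defs
begin

lemma sum_upd_add:
  fixes A :: "'c \<Rightarrow> real"
  assumes "finite C" "j0 \<in> C"
  shows "(\<Sum>j\<in>C. A j * (x(j0 := x j0 + t)) j) = (\<Sum>j\<in>C. A j * x j) + A j0 * t"
proof -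
  have "(\<Sum>j\<in>C. A j * (x(j0 := x j0 + t)) j) = (\<Sum>j\<in>C. A j * x j + (if j = j0 then A j0 * t else 0))"
    by (rule sum.cong) (auto simp: algebra_simps)
  also have "\<dots> = (\<Sum>j\<in>C. A j * x j) + A j0 * t"
    using assms by (simp add: sum.distrib)
  finally show ?thesis .
qed

lemma fredholm:
  fixes A :: "'r \<Rightarrow> 'c \<Rightarrow> real" and y :: "'r \<Rightarrow> real"
  assumes "finite R" "finite C"
    and "\<forall>\<eta>. (\<forall>j\<in>C. (\<Sum>i\<in>R. \<eta> i * A i j) = 0) \<longrightarrow> (\<Sum>i\<in>R. \<eta> i * y i) = 0"
  shows "\<exists>x. \<forall>i\<in>R. (\<Sum>j\<in>C. A i j * x j) = y i"
  using assms(1,3)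
proof (induction R arbitrary: A y rule: finite_induct)
  case empty
  then show ?case by simp
next
  case (insert r R)
  show ?case
  proof (cases "\<forall>j\<in>C. A r j = 0")
    case True
    define e where "e = (\<lambda>i. if i = r then 1 else (0::real))"
    have z: "(\<Sum>i\<in>R. e i * A i j) = 0" for j
      by (rule sum.neutral) (use insert(2) in \<open>auto simp: e_def\<close>)
    have "\<forall>j\<in>C. (\<Sum>i\<in>insert r R. e i * A i j) = 0"
      using True insert(1,2) z by (simp add: e_def)
    then have "(\<Sum>i\<in>insert r R. e i * y i) = 0"
      using insert(4) by blast
    moreover have "(\<Sum>i\<in>R. e i * y i) = 0"
      by (rule sum.neutral) (use insert(2) in \<open>auto simp: e_def\<close>)
    ultimately have yr: "y r = 0"
      using insert(1,2) by (simp add: e_def)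
    have "\<forall>\<eta>. (\<forall>j\<in>C. (\<Sum>i\<in>R. \<eta> i * A i j) = 0) \<longrightarrow> (\<Sum>i\<in>R. \<eta> i * y i) = 0"
    proof (intro allI impI)
      fix \<eta> assume h: "\<forall>j\<in>C. (\<Sum>i\<in>R. \<eta> i * A i j) = 0"
      define \<eta>' where "\<eta>' = \<eta>(r := 0)"
      have s: "(\<Sum>i\<in>R. \<eta>' i * f i) = (\<Sum>i\<in>R. \<eta> i * f i)" for f
        using insert(2) by (intro sum.cong) (auto simp: \<eta>'_def)
      have "\<forall>j\<in>C. (\<Sum>i\<in>insert r R. \<eta>' i * A i j) = 0"
        using h insert(1,2) s by (simp add: \<eta>'_def)
      then have "(\<Sum>i\<in>insert r R. \<eta>' i * y i) = 0" using insert(4) by blast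
      then show "(\<Sum>i\<in>R. \<eta> i * y i) = 0" using insert(1,2) s by (simp add: \<eta>'_def)
    qed
    then obtain x where x: "\<forall>i\<in>R. (\<Sum>j\<in>C. A i j * x j) = y i" using insert(3) by blast
    have "(\<Sum>j\<in>C. A r j * x j) = y r" using True yr by simp
    then show ?thesis using x by auto
  next
    case False
    then obtain j0 where j0: "j0 \<in> C" "A r j0 \<noteq> 0" by auto
    define A' where "A' = (\<lambda>i j. A i j - A i j0 / A r j0 * A r j)"
    define y' where "y' = (\<lambda>i. y i - A i j0 / A r j0 * y r)"
    have "\<forall>\<eta>. (\<forall>j\<in>C. (\<Sum>i\<in>R. \<eta> i * A' i j) = 0) \<longrightarrow> (\<Sum>i\<in>R. \<eta> i * y' i) = 0"
    proof (intro allI impI)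
      fix \<eta> assume h: "\<forall>j\<in>C. (\<Sum>i\<in>R. \<eta> i * A' i j) = 0"
      define c where "c = - (\<Sum>i\<in>R. \<eta> i * A i j0) / A r j0"
      define \<eta>' where "\<eta>' = \<eta>(r := c)"
      have s: "(\<Sum>i\<in>R. \<eta>' i * f i) = (\<Sum>i\<in>R. \<eta> i * f i)" for f
        using insert(2) by (intro sum.cong) (auto simp: \<eta>'_def)
      have e1: "(\<Sum>i\<in>R. \<eta> i * A' i j) = (\<Sum>i\<in>R. \<eta> i * A i j) + c * A r j" for j
      proof -
        have "(\<Sum>i\<in>R. \<eta> i * (A i j0 / A r j0 * A r j)) = (\<Sum>i\<in>R. \<eta> i * A i j0) * (A r j / A r j0)"
          by (simp add: sum_distrib_right sum_distrib_left sum_divide_distrib[symmetric] algebra_simps)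
        then show ?thesis
          by (simp add: A'_def c_def right_diff_distrib sum_subtractf)
      qed
      have e2: "(\<Sum>i\<in>R. \<eta> i * y' i) = (\<Sum>i\<in>R. \<eta> i * y i) + c * y r"
      proof -
        have "(\<Sum>i\<in>R. \<eta> i * (A i j0 / A r j0 * y r)) = (\<Sum>i\<in>R. \<eta> i * A i j0) * (y r / A r j0)"
          by (simp add: sum_distrib_right sum_distrib_left sum_divide_distrib[symmetric] algebra_simps)
        then show ?thesis
          by (simp add: y'_def c_def right_diff_distrib sum_subtractf)
      qed
      have "\<forall>j\<in>C. (\<Sum>i\<in>insert r R. \<eta>' i * A i j) = 0"
        using h insert(1,2) s e1 by (simp add: \<eta>'_def algebra_simps)
      then have "(\<Sum>i\<in>insert r R. \<eta>' i * y i) = 0" using insert(4) by blast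
      then show "(\<Sum>i\<in>R. \<eta> i * y' i) = 0" using insert(1,2) s e2 by (simp add: \<eta>'_def algebra_simps)
    qed
    then obtain x where x: "\<forall>i\<in>R. (\<Sum>j\<in>C. A' i j * x j) = y' i" using insert(3) by blast
    define t where "t = (y r - (\<Sum>j\<in>C. A r j * x j)) / A r j0"
    define x' where "x' = x(j0 := x j0 + t)"
    have sx: "(\<Sum>j\<in>C. A i j * x' j) = (\<Sum>j\<in>C. A i j * x j) + A i j0 * t" for i
      unfolding x'_def using sum_upd_add[OF assms(2) j0(1)] by blast
    have "(\<Sum>j\<in>C. A r j * x' j) = y r" using sx j0(2) by (simp add: t_def)
    moreover have "(\<Sum>j\<in>C. A i j * x' j) = y i" if "i \<in> R" for i
    proof -
      have "(\<Sum>j\<in>C. A' i j * x j) = (\<Sum>j\<in>C. A i j * x j) - A i j0 / A r j0 * (\<Sum>j\<in>C. A r j * x j)"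
        by (simp add: A'_def left_diff_distrib sum_subtractf sum_distrib_left algebra_simps)
      moreover have "(\<Sum>j\<in>C. A' i j * x j) = y' i" using x that by blast
      ultimately have "(\<Sum>j\<in>C. A i j * x j) = y i - A i j0 / A r j0 * (y r - (\<Sum>j\<in>C. A r j * x j))"
        unfolding y'_def by (simp add: algebra_simps)
      then have "(\<Sum>j\<in>C. A i j * x j) = y i - A i j0 * t"
        using j0(2) by (simp add: t_def)
      then show ?thesis using sx by simp
    qed
    ultimately show ?thesis by auto
  qed
qed

lemma homog:
  fixes A :: "'r \<Rightarrow> 'c \<Rightarrow> real"
  assumes "finite R" "finite C" "card R < card C"
  shows "\<exists>x. (\<exists>j\<in>C. x j \<noteq> 0) \<and> (\<forall>j. j \<notin> C \<longrightarrow> x j = 0) \<and> (\<forall>i\<in>R. (\<Sum>j\<in>C. A i j * x j) = 0)"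
  using assms
proof (induction R arbitrary: C A rule: finite_induct)
  case empty
  then obtain j where "j \<in> C" by fastforce
  then show ?case by (intro exI[of _ "\<lambda>k. if k = j then 1 else 0"]) auto
next
  case (insert r R)
  show ?case
  proof (cases "\<forall>j\<in>C. A r j = 0")
    case True
    have "card R < card C" using insert by simp
    then obtain x where x: "(\<exists>j\<in>C. x j \<noteq> 0) \<and> (\<forall>j. j \<notin> C \<longrightarrow> x j = 0) \<and> (\<forall>i\<in>R. (\<Sum>j\<in>C. A i j * x j) = 0)"
      using insert by blast
    then show ?thesis using True by (intro exI[of _ x]) auto
  next
    case False
    then obtain j0 where j0: "j0 \<in> C" "A r j0 \<noteq> 0" by auto
    define A' where "A' = (\<lambda>i j. A i j - A i j0 / A r j0 * A r j)"
    define C' where "C' = C - {j0}"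
    have "card R < card C'" using insert j0 by (simp add: C'_def)
    then obtain x where x: "(\<exists>j\<in>C'. x j \<noteq> 0)" "(\<forall>j. j \<notin> C' \<longrightarrow> x j = 0)" "(\<forall>i\<in>R. (\<Sum>j\<in>C'. A' i j * x j) = 0)"
      using insert.IH[of C' A'] insert.prems by (auto simp: C'_def)
    define t where "t = - (\<Sum>j\<in>C'. A r j * x j) / A r j0"
    define x' where "x' = x(j0 := t)"
    have sx: "(\<Sum>j\<in>C. A i j * x' j) = A i j0 * t + (\<Sum>j\<in>C'. A i j * x j)" for i
    proof -
      have "(\<Sum>j\<in>C. A i j * x' j) = A i j0 * x' j0 + (\<Sum>j\<in>C'. A i j * x' j)"
        unfolding C'_def using insert.prems(1) j0(1) by (simp add: sum.remove)
      also have "(\<Sum>j\<in>C'. A i j * x' j) = (\<Sum>j\<in>C'. A i j * x j)"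
        by (intro sum.cong) (auto simp: x'_def C'_def)
      finally show ?thesis by (simp add: x'_def)
    qed
    have "(\<Sum>j\<in>C. A r j * x' j) = 0" using sx j0(2) by (simp add: t_def)
    moreover have "(\<Sum>j\<in>C. A i j * x' j) = 0" if "i \<in> R" for i
    proof -
      have "(\<Sum>j\<in>C'. A' i j * x j) = (\<Sum>j\<in>C'. A i j * x j) - A i j0 / A r j0 * (\<Sum>j\<in>C'. A r j * x j)"
        by (simp add: A'_def left_diff_distrib sum_subtractf sum_distrib_left algebra_simps)
      then have "(\<Sum>j\<in>C'. A i j * x j) = - A i j0 * t"
        using x(3) that j0(2) by (simp add: t_def field_simps)
      then show ?thesis using sx by simp
    qed
    moreover have "\<exists>j\<in>C. x' j \<noteq> 0" using x(1) by (auto simp: x'_def C'_def)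
    moreover have "\<forall>j. j \<notin> C \<longrightarrow> x' j = 0" using x(2) j0(1) by (auto simp: x'_def C'_def)
    ultimately show ?thesis by blast
  qed
qed


lemma fixed_norm:
  assumes "over_fixed d n u p"
  shows "cmod (snd p k) = cmod (fst p k)"
proof -
  obtain t where t: "t \<in> Ngrp d n u" "sigma p = act t p"
    using assms unfolding over_fixed_def by blast
  have "fst (sigma p) k = fst (act t p) k" using t(2) by simp
  then have "cnj (snd p k) = t k * fst p k" by (simp add: sigma_def act_def)
  then have "cmod (cnj (snd p k)) = cmod (t k) * cmod (fst p k)" by (simp add: norm_mult)
  moreover have "cmod (t k) = 1" using t(1) by (simp add: Ngrp_def)
  ultimately show ?thesis by simp
qed

lemma fixed_sq:
  assumes "over_fixed d n u p"
  shows "(Re (snd p k))\<^sup>2 + (Im (snd p k))\<^sup>2 = (Re (fst p k))\<^sup>2 + (Im (fst p k))\<^sup>2"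
  using fixed_norm[OF assms, of k] by (metis cmod_power2)

lemma Xf_Cdd: "\<xi> \<in> nfrak d n u \<Longrightarrow> Xf \<xi> p \<in> Cdd d"
  by (auto simp: Cdd_def Xf_def nfrak_def)

lemma part2:
  assumes "over_fixed d n u p" "Nsp d n u p \<noteq> {((\<lambda>_. 0), (\<lambda>_. 0))}"
  shows "\<not> condD d n u p"
proof -
  have "Nsp d n u p \<subseteq> Nperp d n u p"
  proof
    fix Y assume "Y \<in> Nsp d n u p"
    then obtain \<xi> where \<xi>: "\<xi> \<in> nfrak d n u" "Y = Xf \<xi> p" by (auto simp: Nsp_def)
    have "gmet d Y' Y = 0" if hY: "Y' \<in> Nsp d n u p" for Y'
    proof -
      obtain \<eta> where \<eta>: "Y' = Xf \<eta> p" using hY unfolding Nsp_def by blast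
      have "gmet d Y' Y = (\<Sum>k<d. Re (fst Y' k * cnj (fst Y k) - snd Y' k * cnj (snd Y k)))"
        by (simp add: gmet_def)
      also have "\<dots> = (\<Sum>k<d. 0)"
      proof (rule sum.cong)
        fix k
        have h: "(Re (snd p k))\<^sup>2 + (Im (snd p k))\<^sup>2 = (Re (fst p k))\<^sup>2 + (Im (fst p k))\<^sup>2"
          by (rule fixed_sq[OF assms(1)])
        have "Re (fst Y' k * cnj (fst Y k) - snd Y' k * cnj (snd Y k))
           = \<eta> k * \<xi> k * (((Re (fst p k))\<^sup>2 + (Im (fst p k))\<^sup>2) - ((Re (snd p k))\<^sup>2 + (Im (snd p k))\<^sup>2))"
          by (simp add: \<eta> \<xi>(2) Xf_def power2_eq_square algebra_simps)
        then show "Re (fst Y' k * cnj (fst Y k) - snd Y' k * cnj (snd Y k)) = 0" using h by simp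
      qed simp
      finally show ?thesis by simp
    qed
    then show "Y \<in> Nperp d n u p" using \<xi> Xf_Cdd by (auto simp: Nperp_def)
  qed
  then have "Nsp d n u p \<inter> Nperp d n u p = Nsp d n u p" by blast
  then show ?thesis using assms(2) by (simp add: condD_def)
qed

lemma range_perp:
  fixes y :: "nat \<Rightarrow> real"
  assumes "\<forall>\<xi>\<in>nfrak d n u. (\<Sum>k<d. y k * \<xi> k) = 0"
  shows "\<exists>a. \<forall>k<d. (\<Sum>j<n. a j * of_int (u k j)) = y k"
proof -
  have "\<forall>\<eta>. (\<forall>j\<in>{..<n}. (\<Sum>k\<in>{..<d}. \<eta> k * of_int (u k j)) = 0) \<longrightarrow> (\<Sum>k\<in>{..<d}. \<eta> k * y k) = 0"
  proof (intro allI impI)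
    fix \<eta> :: "nat \<Rightarrow> real"
    assume h: "\<forall>j\<in>{..<n}. (\<Sum>k\<in>{..<d}. \<eta> k * of_int (u k j)) = 0"
    define \<xi> where "\<xi> = (\<lambda>k. if k < d then \<eta> k else 0)"
    have s: "(\<Sum>k<d. \<xi> k * f k) = (\<Sum>k<d. \<eta> k * f k)" for f
      by (rule sum.cong) (auto simp: \<xi>_def)
    have "\<xi> \<in> nfrak d n u" using h s by (auto simp: nfrak_def \<xi>_def)
    then have "(\<Sum>k<d. y k * \<xi> k) = 0" using assms by blast
    then show "(\<Sum>k\<in>{..<d}. \<eta> k * y k) = 0" using s[of y] by (simp add: mult.commute)
  qed
  from fredholm[OF _ _ this] obtain x where
    x: "\<forall>k\<in>{..<d}. (\<Sum>j\<in>{..<n}. of_int (u k j) * x j) = y k" by auto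
  show ?thesis by (rule exI[of _ x]) (use x in \<open>auto simp: mult.commute\<close>)
qed

lemma part1:
  assumes pZ: "p \<in> mu0 d n u lam1 lam2 lam3" and fx: "over_fixed d n u p"
  shows "\<exists>(a :: nat \<Rightarrow> real) (b :: nat \<Rightarrow> complex). \<forall>k<d.
           (\<Sum>j<n. a j * of_int (u k j)) - lam1 k
              \<ge> cmod ((\<Sum>j<n. b j * of_int (u k j)) - (complex_of_real (lam2 k) + \<i> * complex_of_real (lam3 k)))
         \<and> (\<Sum>j<n. a j * of_int (u k j)) - lam1 k
              = cmod ((\<Sum>j<n. b j * of_int (u k j)) - (complex_of_real (lam2 k) + \<i> * complex_of_real (lam3 k)))"
proof -
  define lc where "lc = (\<lambda>k. complex_of_real (lam2 k) + \<i> * complex_of_real (lam3 k))"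
  define yA where "yA = (\<lambda>k. ((cmod (fst p k))\<^sup>2 + (cmod (snd p k))\<^sup>2) / 2 + lam1 k)"
  define yC where "yC = (\<lambda>k. \<i> * fst p k * cnj (snd p k) + lc k)"
  have mu: "\<forall>\<xi>\<in>nfrak d n u. muI d lam1 p \<xi> = 0 \<and> muC d lc p \<xi> = 0"
    using pZ by (simp add: mu0_def lc_def)
  have hA: "\<forall>\<xi>\<in>nfrak d n u. (\<Sum>k<d. yA k * \<xi> k) = 0"
    using mu by (simp add: muI_def yA_def algebra_simps)
  have hR: "\<forall>\<xi>\<in>nfrak d n u. (\<Sum>k<d. Re (yC k) * \<xi> k) = 0"
  proof
    fix \<xi> assume "\<xi> \<in> nfrak d n u"
    then have "muC d lc p \<xi> = 0" using mu by blast
    then have "Re (muC d lc p \<xi>) = 0" by simp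
    then show "(\<Sum>k<d. Re (yC k) * \<xi> k) = 0" by (simp add: muC_def yC_def)
  qed
  have hI: "\<forall>\<xi>\<in>nfrak d n u. (\<Sum>k<d. Im (yC k) * \<xi> k) = 0"
  proof
    fix \<xi> assume "\<xi> \<in> nfrak d n u"
    then have "muC d lc p \<xi> = 0" using mu by blast
    then have "Im (muC d lc p \<xi>) = 0" by simp
    then show "(\<Sum>k<d. Im (yC k) * \<xi> k) = 0" by (simp add: muC_def yC_def)
  qed
  obtain a where a: "\<forall>k<d. (\<Sum>j<n. a j * of_int (u k j)) = yA k" using range_perp[OF hA] by blast
  obtain bR where bR: "\<forall>k<d. (\<Sum>j<n. bR j * of_int (u k j)) = Re (yC k)" using range_perp[OF hR] by blast
  obtain bI where bI: "\<forall>k<d. (\<Sum>j<n. bI j * of_int (u k j)) = Im (yC k)" using range_perp[OF hI] by blast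
  define b where "b = (\<lambda>j. Complex (bR j) (bI j))"
  have bsum: "(\<Sum>j<n. b j * of_int (u k j)) = yC k" if "k < d" for k
    using bR bI that by (simp add: complex_eq_iff b_def)
  show ?thesis
  proof (intro exI[of _ a] exI[of _ b] allI impI)
    fix k assume k: "k < d"
    have e1: "(\<Sum>j<n. a j * of_int (u k j)) - lam1 k = (cmod (fst p k))\<^sup>2"
      using a k fixed_norm[OF fx, of k] by (simp add: yA_def)
    have "cmod ((\<Sum>j<n. b j * of_int (u k j)) - lc k) = cmod (fst p k) * cmod (snd p k)"
      using bsum[OF k] by (simp add: yC_def norm_mult)
    then have e2: "cmod ((\<Sum>j<n. b j * of_int (u k j)) - lc k) = (cmod (fst p k))\<^sup>2"
      using fixed_norm[OF fx, of k] by (simp add: power2_eq_square)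
    show "(\<Sum>j<n. a j * of_int (u k j)) - lam1 k
              \<ge> cmod ((\<Sum>j<n. b j * of_int (u k j)) - (complex_of_real (lam2 k) + \<i> * complex_of_real (lam3 k)))
         \<and> (\<Sum>j<n. a j * of_int (u k j)) - lam1 k
              = cmod ((\<Sum>j<n. b j * of_int (u k j)) - (complex_of_real (lam2 k) + \<i> * complex_of_real (lam3 k)))"
      using e1 e2 by (simp add: lc_def)
  qed
qed

lemma cplx_zero_factor:
  fixes a b :: real and z :: complex
  assumes "(complex_of_real a + \<i> * complex_of_real b) * z = 0"
  shows "complex_of_real a * z = 0"
proof -
  have "z = 0 \<or> complex_of_real a + \<i> * complex_of_real b = 0" using assms mult_eq_0_iff by blast
  moreover have "complex_of_real a + \<i> * complex_of_real b = 0 \<Longrightarrow> a = 0"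
    by (simp add: complex_eq_iff)
  ultimately show ?thesis by auto
qed

lemma zero_pt_eq: "(Y :: pt) = ((\<lambda>_. 0), (\<lambda>_. 0)) \<longleftrightarrow> (\<forall>k. fst Y k = 0 \<and> snd Y k = 0)"
  by (auto simp: prod_eq_iff fun_eq_iff)

lemma zero_nfrak: "(\<lambda>_. 0) \<in> nfrak d n u"
  by (simp add: nfrak_def)

lemma part3_deg:
  assumes pZ: "p \<in> Z" and fx: "over_fixed d n u p" and S: "condS d n u Z"
    and \<xi>: "\<xi> \<in> nfrak d n u" "\<xi> \<noteq> (\<lambda>_. 0)"
  shows "induced_degenerate d n u Iop p \<and> induced_degenerate d n u Sop p
             \<and> induced_degenerate d n u Top p"
proof -
  define vI where "vI = Top (Xf \<xi> p)"
  define vS where "vS = Iop (Xf \<xi> p)"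
  have h: "(Re (snd p k))\<^sup>2 + (Im (snd p k))\<^sup>2 = (Re (fst p k))\<^sup>2 + (Im (fst p k))\<^sup>2" for k
    by (rule fixed_sq[OF fx])
  have \<xi>0: "\<xi> k = 0" if "k \<ge> d" for k using \<xi>(1) that by (simp add: nfrak_def)
  have vS_T: "vS \<in> Tsp d n u p"
  proof -
    have "vS \<in> Cdd d" using \<xi>0 by (simp add: Cdd_def vS_def Iop_def Xf_def)
    moreover have "dmuI d p vS \<eta> = 0 \<and> dmuC d p vS \<eta> = 0" for \<eta>
    proof
      show "dmuI d p vS \<eta> = 0" unfolding dmuI_def
      proof (rule sum.neutral, intro ballI)
        fix k
        have "Re (fst p k * cnj (fst vS k) + snd p k * cnj (snd vS k)) * \<eta> k
            = \<xi> k * \<eta> k * (((Re (snd p k))\<^sup>2 + (Im (snd p k))\<^sup>2) - ((Re (fst p k))\<^sup>2 + (Im (fst p k))\<^sup>2))"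
          by (simp add: vS_def Iop_def Xf_def power2_eq_square algebra_simps)
        then show "Re (fst p k * cnj (fst vS k) + snd p k * cnj (snd vS k)) * \<eta> k = 0" using h[of k] by simp
      qed
      show "dmuC d p vS \<eta> = 0" unfolding dmuC_def
        by (rule sum.neutral) (simp add: vS_def Iop_def Xf_def complex_eq_iff algebra_simps)
    qed
    ultimately show ?thesis by (simp add: Tsp_def)
  qed
  have vI_T: "vI \<in> Tsp d n u p"
  proof -
    have "vI \<in> Cdd d" using \<xi>0 by (simp add: Cdd_def vI_def Top_def Sop_def Iop_def Xf_def)
    moreover have "dmuI d p vI \<eta> = 0 \<and> dmuC d p vI \<eta> = 0" for \<eta>
    proof
      show "dmuI d p vI \<eta> = 0" unfolding dmuI_def
        by (rule sum.neutral) (simp add: vI_def Top_def Sop_def Iop_def Xf_def algebra_simps)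
      show "dmuC d p vI \<eta> = 0" unfolding dmuC_def
      proof (rule sum.neutral, intro ballI)
        fix k
        have "Re (\<i> * (fst vI k * cnj (snd p k) + fst p k * cnj (snd vI k)) * complex_of_real (\<eta> k)) = 0"
          by (simp add: vI_def Top_def Sop_def Iop_def Xf_def algebra_simps)
        moreover have "Im (\<i> * (fst vI k * cnj (snd p k) + fst p k * cnj (snd vI k)) * complex_of_real (\<eta> k))
            = \<xi> k * \<eta> k * (((Re (fst p k))\<^sup>2 + (Im (fst p k))\<^sup>2) - ((Re (snd p k))\<^sup>2 + (Im (snd p k))\<^sup>2))"
          by (simp add: vI_def Top_def Sop_def Iop_def Xf_def power2_eq_square algebra_simps)
        ultimately show "\<i> * (fst vI k * cnj (snd p k) + fst p k * cnj (snd vI k)) * complex_of_real (\<eta> k) = 0"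
          using h[of k] by (simp add: complex_eq_iff)
      qed
    qed
    ultimately show ?thesis by (simp add: Tsp_def)
  qed
  have vS_N: "vS \<notin> Nsp d n u p"
  proof
    assume "vS \<in> Nsp d n u p"
    then obtain \<eta> where \<eta>: "\<eta> \<in> nfrak d n u" "vS = Xf \<eta> p" unfolding Nsp_def by blast
    have "fst vS k = 0 \<and> snd vS k = 0" for k
    proof -
      have "fst vS k = fst (Xf \<eta> p) k" "snd vS k = snd (Xf \<eta> p) k" using \<eta>(2) by simp_all
      note c = this
      have "(complex_of_real (\<xi> k) + \<i> * complex_of_real (\<eta> k)) * fst p k = 0"
        using c(1) unfolding vS_def Iop_def Xf_def by (simp add: algebra_simps neg_eq_iff_add_eq_0)
      then have a: "complex_of_real (\<xi> k) * fst p k = 0" by (rule cplx_zero_factor)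
      have "(complex_of_real (\<xi> k) + \<i> * complex_of_real (- \<eta> k)) * snd p k = 0"
        using c(2) unfolding vS_def Iop_def Xf_def by (simp add: algebra_simps)
      then have b: "complex_of_real (\<xi> k) * snd p k = 0" by (rule cplx_zero_factor)
      show ?thesis using a b by (simp add: vS_def Iop_def Xf_def)
    qed
    then have v0: "vS = ((\<lambda>_. 0), (\<lambda>_. 0))" by (simp add: zero_pt_eq)
    have "padd vS (padd (Sop (Xf (\<lambda>_. 0) p)) (Top (Xf (\<lambda>_. 0) p))) = ((\<lambda>_. 0), (\<lambda>_. 0))"
      by (simp add: v0 zero_pt_eq padd_def Sop_def Top_def Iop_def Xf_def)
    then have "padd (Iop (Xf \<xi> p)) (padd (Sop (Xf (\<lambda>_. 0) p)) (Top (Xf (\<lambda>_. 0) p))) = ((\<lambda>_. 0), (\<lambda>_. 0))"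
      by (simp only: vS_def)
    then have "\<xi> = (\<lambda>_. 0)" using S pZ \<xi>(1) zero_nfrak unfolding condS_def by blast
    then show False using \<xi>(2) by simp
  qed
  have vI_N: "vI \<notin> Nsp d n u p"
  proof
    assume "vI \<in> Nsp d n u p"
    then obtain \<eta> where \<eta>: "\<eta> \<in> nfrak d n u" "vI = Xf \<eta> p" unfolding Nsp_def by blast
    have "fst (padd (Iop (Xf \<eta> p)) (padd (Sop (Xf \<xi> p)) (Top (Xf (\<lambda>_. 0) p)))) k = 0 \<and>
          snd (padd (Iop (Xf \<eta> p)) (padd (Sop (Xf \<xi> p)) (Top (Xf (\<lambda>_. 0) p)))) k = 0" for k
    proof -
      have "fst vI k = fst (Xf \<eta> p) k" "snd vI k = snd (Xf \<eta> p) k" using \<eta>(2) by simp_all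
      note c = this
      have a: "- (complex_of_real (\<eta> k) * fst p k) + \<i> * complex_of_real (\<xi> k) * snd p k = 0"
        using c(1) unfolding vI_def Top_def Sop_def Iop_def Xf_def by (simp add: complex_eq_iff algebra_simps)
      have b: "complex_of_real (\<eta> k) * snd p k + \<i> * complex_of_real (\<xi> k) * fst p k = 0"
        using c(2) unfolding vI_def Top_def Sop_def Iop_def Xf_def by (simp add: complex_eq_iff algebra_simps)
      show ?thesis using a b by (simp add: padd_def Iop_def Sop_def Top_def Xf_def algebra_simps)
    qed
    then have "padd (Iop (Xf \<eta> p)) (padd (Sop (Xf \<xi> p)) (Top (Xf (\<lambda>_. 0) p))) = ((\<lambda>_. 0), (\<lambda>_. 0))"
      by (simp add: zero_pt_eq)
    then have "\<xi> = (\<lambda>_. 0)" using S pZ \<xi>(1) \<eta>(1) zero_nfrak unfolding condS_def by blast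
    then show False using \<xi>(2) by simp
  qed
  have oI: "omega d Iop vI q = 0" if q: "q \<in> Tsp d n u p" for q
  proof -
    have "dmuC d p q \<xi> = 0" using q \<xi>(1) by (simp add: Tsp_def)
    then have "Re (dmuC d p q \<xi>) = 0" by simp
    moreover have "omega d Iop vI q = - Re (dmuC d p q \<xi>)"
      unfolding omega_def gmet_def dmuC_def Re_sum sum_negf[symmetric]
      by (rule sum.cong) (simp_all add: vI_def Top_def Sop_def Iop_def Xf_def algebra_simps)
    ultimately show ?thesis by simp
  qed
  have oS: "omega d Sop vS q = 0" if q: "q \<in> Tsp d n u p" for q
  proof -
    have "dmuC d p q \<xi> = 0" using q \<xi>(1) by (simp add: Tsp_def)
    then have "Im (dmuC d p q \<xi>) = 0" by simp
    moreover have "omega d Sop vS q = - Im (dmuC d p q \<xi>)"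
      unfolding omega_def gmet_def dmuC_def Re_sum Im_sum sum_negf[symmetric]
      by (rule sum.cong) (simp_all add: vS_def Sop_def Iop_def Xf_def algebra_simps)
    ultimately show ?thesis by simp
  qed
  have oT: "omega d Top vS q = 0" if q: "q \<in> Tsp d n u p" for q
  proof -
    have "dmuC d p q \<xi> = 0" using q \<xi>(1) by (simp add: Tsp_def)
    then have "Re (dmuC d p q \<xi>) = 0" by simp
    moreover have "omega d Top vS q = Re (dmuC d p q \<xi>)"
      unfolding omega_def gmet_def dmuC_def Re_sum
      by (rule sum.cong) (simp_all add: vS_def Top_def Sop_def Iop_def Xf_def algebra_simps)
    ultimately show ?thesis by simp
  qed
  show ?thesis unfolding induced_degenerate_def
    using vI_T vI_N oI vS_T vS_N oS oT by blast
qed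

lemma nfrak_nonzero:
  assumes "n < d"
  shows "\<exists>\<xi>\<in>nfrak d n u. \<xi> \<noteq> (\<lambda>_. 0)"
proof -
  obtain x :: "nat \<Rightarrow> real" where x: "\<exists>k\<in>{..<d}. x k \<noteq> 0" "\<forall>k. k \<notin> {..<d} \<longrightarrow> x k = 0"
    "\<forall>j\<in>{..<n}. (\<Sum>k\<in>{..<d}. of_int (u k j) * x k) = 0"
    using homog[of "{..<n}" "{..<d}" "\<lambda>j k. of_int (u k j)"] assms by auto
  have "x \<in> nfrak d n u" using x(2,3) by (auto simp: nfrak_def mult.commute)
  moreover have "x \<noteq> (\<lambda>_. 0)" using x(1) by auto
  ultimately show ?thesis by blast
qed

lemma sum3: "(\<Sum>s<(3::nat). f s) = f 0 + f 1 + (f 2 :: real)"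
  by (simp add: eval_nat_numeral)

lemma sum4: "(\<Sum>s<(4::nat). f s) = f 0 + f 1 + f 2 + (f 3 :: real)"
  by (simp add: eval_nat_numeral)

lemma kill_perp:
  assumes "\<xi> \<in> nfrak d n u" "\<forall>k<d. l k = c k + (\<Sum>j<n. of_int (u k j) * a j)"
  shows "(\<Sum>k<d. l k * \<xi> k) = (\<Sum>k<d. c k * \<xi> k)"
proof -
  have "(\<Sum>k<d. l k * \<xi> k) = (\<Sum>k<d. c k * \<xi> k + (\<Sum>j<n. of_int (u k j) * a j * \<xi> k))"
    using assms(2) by (intro sum.cong) (auto simp: algebra_simps sum_distrib_right sum_distrib_left)
  also have "\<dots> = (\<Sum>k<d. c k * \<xi> k) + (\<Sum>j<n. a j * (\<Sum>k<d. \<xi> k * of_int (u k j)))"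
    by (simp add: sum.distrib sum_distrib_left algebra_simps sum.swap[of _ "{..<n}"])
  also have "(\<Sum>j<n. a j * (\<Sum>k<d. \<xi> k * of_int (u k j))) = 0"
    using assms(1) by (simp add: nfrak_def)
  finally show ?thesis by simp
qed

lemma part3_reg:
  fixes c1 c2 c3 :: "nat \<Rightarrow> real"
  assumes S: "condS d n u Z" and pZ: "p \<in> Z" and pC: "p \<in> Cdd d"
  shows "\<exists>v\<in>Cdd d. \<forall>\<xi>\<in>nfrak d n u.
      dmuI d p v \<xi> = (\<Sum>k<d. c1 k * \<xi> k) \<and>
      Re (dmuC d p v \<xi>) = (\<Sum>k<d. c2 k * \<xi> k) \<and>
      Im (dmuC d p v \<xi>) = (\<Sum>k<d. c3 k * \<xi> k)"
proof -
  define coef where "coef = (\<lambda>s t k.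
     if s = (0::nat) then (if t = (0::nat) then Re (fst p k) else if t = 1 then Im (fst p k) else if t = 2 then Re (snd p k) else Im (snd p k))
     else if s = 1 then (if t = 0 then Im (snd p k) else if t = 1 then - Re (snd p k) else if t = 2 then - Im (fst p k) else Re (fst p k))
     else (if t = 0 then Re (snd p k) else if t = 1 then Im (snd p k) else if t = 2 then Re (fst p k) else Im (fst p k)))"
  define cc where "cc = (\<lambda>s k. if s = (0::nat) then c1 k else if s = 1 then c2 k else c3 k)"
  define R where "R = ({..<3} \<times> {..<d} :: (nat \<times> nat) set)"
  define C1 where "C1 = ({..<4} \<times> {..<d} :: (nat \<times> nat) set)"
  define C2 where "C2 = ({4..<7} \<times> {..<n} :: (nat \<times> nat) set)"
  define C where "C = C1 \<union> C2"
  define A where "A = (\<lambda>(r::nat\<times>nat) (c::nat\<times>nat). if fst c < 4 then (if snd c = snd r then coef (fst r) (fst c) (snd r) else 0)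
      else (if fst c = fst r + 4 then - of_int (u (snd r) (snd c)) else (0::real)))"
  define y where "y = (\<lambda>r::nat\<times>nat. cc (fst r) (snd r))"
  have fin: "finite R" "finite C1" "finite C2" "finite C" by (simp_all add: R_def C1_def C2_def C_def)
  have disj: "C1 \<inter> C2 = {}" by (auto simp: C1_def C2_def)
  have rowsum: "(\<Sum>c\<in>C. A (s,k) c * x c) = (\<Sum>t<4. coef s t k * x (t,k)) - (\<Sum>j<n. of_int (u k j) * x (s+4, j))"
    if "s < 3" "k < d" for s k x
  proof -
    have "(\<Sum>c\<in>C1. A (s,k) c * x c) = (\<Sum>t<4. \<Sum>j<d. A (s,k) (t,j) * x (t,j))"
      unfolding C1_def by (simp add: sum.cartesian_product)
    also have "\<dots> = (\<Sum>t<4. coef s t k * x (t,k))"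
    proof (rule sum.cong)
      fix t assume "t \<in> {..<(4::nat)}"
      then have "(\<Sum>j<d. A (s,k) (t,j) * x (t,j)) = (\<Sum>j<d. if j = k then coef s t k * x (t,k) else 0)"
        by (intro sum.cong) (auto simp: A_def)
      then show "(\<Sum>j<d. A (s,k) (t,j) * x (t,j)) = coef s t k * x (t,k)" using that by simp
    qed simp
    finally have e1: "(\<Sum>c\<in>C1. A (s,k) c * x c) = (\<Sum>t<4. coef s t k * x (t,k))" .
    have "(\<Sum>c\<in>C2. A (s,k) c * x c) = (\<Sum>t\<in>{4..<7}. \<Sum>j<n. A (s,k) (t,j) * x (t,j))"
      unfolding C2_def by (simp add: sum.cartesian_product)
    also have "\<dots> = (\<Sum>t\<in>{4..<7}. if t = s + 4 then (\<Sum>j<n. - of_int (u k j) * x (s+4,j)) else 0)"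
      by (intro sum.cong) (auto simp: A_def)
    also have "\<dots> = (\<Sum>j<n. - of_int (u k j) * x (s+4,j))" using that by simp
    finally have e2: "(\<Sum>c\<in>C2. A (s,k) c * x c) = - (\<Sum>j<n. of_int (u k j) * x (s+4, j))"
      by (simp add: sum_negf)
    show ?thesis unfolding C_def using e1 e2 fin disj by (simp add: sum.union_disjoint)
  qed
  have colsum1: "(\<Sum>r\<in>R. \<eta> r * A r (t,k)) = (\<Sum>s<3. \<eta> (s,k) * coef s t k)"
    if "t < 4" "k < d" for \<eta> t k
  proof -
    have "(\<Sum>r\<in>R. \<eta> r * A r (t,k)) = (\<Sum>s<3. \<Sum>k'<d. \<eta> (s,k') * A (s,k') (t,k))"
      unfolding R_def by (simp add: sum.cartesian_product)
    also have "\<dots> = (\<Sum>s<3. \<eta> (s,k) * coef s t k)"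
    proof (rule sum.cong)
      fix s assume "s \<in> {..<(3::nat)}"
      have "(\<Sum>k'<d. \<eta> (s,k') * A (s,k') (t,k)) = (\<Sum>k'<d. if k' = k then \<eta> (s,k) * coef s t k else 0)"
        using that by (intro sum.cong) (auto simp: A_def)
      then show "(\<Sum>k'<d. \<eta> (s,k') * A (s,k') (t,k)) = \<eta> (s,k) * coef s t k" using that by simp
    qed simp
    finally show ?thesis .
  qed
  have colsum2: "(\<Sum>r\<in>R. \<eta> r * A r (s'+4,j)) = - (\<Sum>k<d. \<eta> (s',k) * of_int (u k j))"
    if "s' < 3" for \<eta> s' j
  proof -
    have "(\<Sum>r\<in>R. \<eta> r * A r (s'+4,j)) = (\<Sum>s<3. \<Sum>k<d. \<eta> (s,k) * A (s,k) (s'+4,j))"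
      unfolding R_def by (simp add: sum.cartesian_product)
    also have "\<dots> = (\<Sum>s<3. if s = s' then (\<Sum>k<d. - (\<eta> (s',k) * of_int (u k j))) else 0)"
      by (intro sum.cong) (auto simp: A_def)
    also have "\<dots> = (\<Sum>k<d. - (\<eta> (s',k) * of_int (u k j)))" using that by simp
    finally show ?thesis by (simp add: sum_negf)
  qed
  have hyp: "\<forall>\<eta>. (\<forall>c\<in>C. (\<Sum>r\<in>R. \<eta> r * A r c) = 0) \<longrightarrow> (\<Sum>r\<in>R. \<eta> r * y r) = 0"
  proof (intro allI impI)
    fix \<eta> :: "nat \<times> nat \<Rightarrow> real"
    assume h: "\<forall>c\<in>C. (\<Sum>r\<in>R. \<eta> r * A r c) = 0"
    define \<xi> where "\<xi> = (\<lambda>s k. if k < d then \<eta> (s,k) else 0)"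
    have nf: "\<xi> s \<in> nfrak d n u" if "s < 3" for s
    proof -
      have "(\<Sum>k<d. \<xi> s k * of_int (u k j)) = 0" if "j < n" for j
      proof -
        have "(s+4, j) \<in> C" using \<open>s < 3\<close> that by (auto simp: C_def C2_def)
        then have "(\<Sum>r\<in>R. \<eta> r * A r (s+4,j)) = 0" using h by blast
        then have "(\<Sum>k<d. \<eta> (s,k) * of_int (u k j)) = 0" using colsum2[OF \<open>s < 3\<close>] by simp
        moreover have "(\<Sum>k<d. \<xi> s k * of_int (u k j)) = (\<Sum>k<d. \<eta> (s,k) * of_int (u k j))"
          by (intro sum.cong) (auto simp: \<xi>_def)
        ultimately show ?thesis by simp
      qed
      then show ?thesis by (auto simp: nfrak_def \<xi>_def)
    qed
    have eqs: "(\<Sum>s<3. \<eta> (s,k) * coef s t k) = 0" if "t < 4" "k < d" for t k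
    proof -
      have "(t, k) \<in> C" using that by (auto simp: C_def C1_def)
      then have "(\<Sum>r\<in>R. \<eta> r * A r (t,k)) = 0" using h by blast
      then show ?thesis using colsum1[OF that] by simp
    qed
    have "padd (Iop (Xf (\<xi> 0) p)) (padd (Sop (Xf (\<xi> 1) p)) (Top (Xf (\<xi> 2) p))) = ((\<lambda>_. 0), (\<lambda>_. 0))"
      unfolding zero_pt_eq
    proof
      fix k
      show "fst (padd (Iop (Xf (\<xi> 0) p)) (padd (Sop (Xf (\<xi> 1) p)) (Top (Xf (\<xi> 2) p)))) k = 0 \<and>
            snd (padd (Iop (Xf (\<xi> 0) p)) (padd (Sop (Xf (\<xi> 1) p)) (Top (Xf (\<xi> 2) p)))) k = 0"
      proof (cases "k < d")
        case True
        have q0: "\<eta> (0,k) * Re (fst p k) + \<eta> (1,k) * Im (snd p k) + \<eta> (2,k) * Re (snd p k) = 0"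
          using eqs[of 0 k] True by (simp add: sum3 coef_def)
        have q1: "\<eta> (0,k) * Im (fst p k) - \<eta> (1,k) * Re (snd p k) + \<eta> (2,k) * Im (snd p k) = 0"
          using eqs[of 1 k] True by (simp add: sum3 coef_def)
        have q2: "\<eta> (0,k) * Re (snd p k) - \<eta> (1,k) * Im (fst p k) + \<eta> (2,k) * Re (fst p k) = 0"
          using eqs[of 2 k] True by (simp add: sum3 coef_def)
        have q3: "\<eta> (0,k) * Im (snd p k) + \<eta> (1,k) * Re (fst p k) + \<eta> (2,k) * Im (fst p k) = 0"
          using eqs[of 3 k] True by (simp add: sum3 coef_def)
        show ?thesis using True q0 q1 q2 q3
          by (simp add: padd_def Iop_def Sop_def Top_def Xf_def \<xi>_def complex_eq_iff algebra_simps)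
      next
        case False
        then show ?thesis by (simp add: padd_def Iop_def Sop_def Top_def Xf_def \<xi>_def)
      qed
    qed
    moreover have n0: "\<xi> 0 \<in> nfrak d n u" by (rule nf) simp
    moreover have n1: "\<xi> 1 \<in> nfrak d n u" by (rule nf) simp
    moreover have n2: "\<xi> 2 \<in> nfrak d n u" by (rule nf) simp
    ultimately have z: "\<xi> 0 = (\<lambda>_. 0) \<and> \<xi> 1 = (\<lambda>_. 0) \<and> \<xi> 2 = (\<lambda>_. 0)"
      using S pZ unfolding condS_def by blast
    have "\<eta> r = 0" if hr: "r \<in> R" for r
    proof -
      obtain s k where r: "r = (s,k)" "s < 3" "k < d" using hr unfolding R_def by blast
      have "\<xi> s k = 0" using z r(2) by (auto simp: eval_nat_numeral less_Suc_eq)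
      then show ?thesis using r by (simp add: \<xi>_def)
    qed
    then show "(\<Sum>r\<in>R. \<eta> r * y r) = 0" by simp
  qed
  obtain x where x: "\<forall>r\<in>R. (\<Sum>c\<in>C. A r c * x c) = y r"
    using fredholm[OF fin(1) fin(4) hyp] by blast
  define v where "v = ((\<lambda>k. if k < d then Complex (x (0,k)) (x (1,k)) else 0),
                       (\<lambda>k. if k < d then Complex (x (2,k)) (x (3,k)) else 0))"
  define ell where "ell = (\<lambda>s k. (\<Sum>t<4. coef s t k * x (t,k)))"
  have rowi: "\<forall>k<d. ell s k = cc s k + (\<Sum>j<n. of_int (u k j) * x (s+4, j))" if "s < 3" for s
  proof (intro allI impI)
    fix k assume k: "k < d"
    have "(s,k) \<in> R" using that k by (simp add: R_def)
    then have "(\<Sum>c\<in>C. A (s,k) c * x c) = y (s,k)" using x by blast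
    then show "ell s k = cc s k + (\<Sum>j<n. of_int (u k j) * x (s+4, j))"
      using rowsum[OF that k, of x] by (simp add: ell_def y_def)
  qed
  have vC: "v \<in> Cdd d" by (simp add: v_def Cdd_def)
  have d1: "dmuI d p v \<xi> = (\<Sum>k<d. ell 0 k * \<xi> k)" for \<xi>
    unfolding dmuI_def by (intro sum.cong) (simp_all add: v_def ell_def sum4 coef_def)
  have d2: "Re (dmuC d p v \<xi>) = (\<Sum>k<d. ell 1 k * \<xi> k)" for \<xi>
    unfolding dmuC_def Re_sum by (intro sum.cong) (simp_all add: v_def ell_def sum4 coef_def algebra_simps)
  have d3: "Im (dmuC d p v \<xi>) = (\<Sum>k<d. ell 2 k * \<xi> k)" for \<xi>
    unfolding dmuC_def Im_sum by (intro sum.cong) (simp_all add: v_def ell_def sum4 coef_def algebra_simps)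
  show ?thesis
  proof (intro bexI[OF _ vC] ballI)
    fix \<xi> assume \<xi>: "\<xi> \<in> nfrak d n u"
    have "(\<Sum>k<d. ell 0 k * \<xi> k) = (\<Sum>k<d. cc 0 k * \<xi> k)" by (rule kill_perp[OF \<xi> rowi]) simp
    moreover have "(\<Sum>k<d. ell 1 k * \<xi> k) = (\<Sum>k<d. cc 1 k * \<xi> k)" by (rule kill_perp[OF \<xi> rowi]) simp
    moreover have "(\<Sum>k<d. ell 2 k * \<xi> k) = (\<Sum>k<d. cc 2 k * \<xi> k)" by (rule kill_perp[OF \<xi> rowi]) simp
    ultimately show "dmuI d p v \<xi> = (\<Sum>k<d. c1 k * \<xi> k) \<and>
      Re (dmuC d p v \<xi>) = (\<Sum>k<d. c2 k * \<xi> k) \<and>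
      Im (dmuC d p v \<xi>) = (\<Sum>k<d. c3 k * \<xi> k)"
      using d1 d2 d3 by (simp add: cc_def)
  qed
qed

theorem proposition6p4:
  fixes d n :: nat and u :: "nat \<Rightarrow> nat \<Rightarrow> int"
    and lam1 lam2 lam3 :: "nat \<Rightarrow> real"
  assumes span: "spans d n u"
  defines "Z \<equiv> mu0 d n u lam1 lam2 lam3"
  shows
    "((\<exists>p\<in>Z. over_fixed d n u p) \<longrightarrow>
        (\<exists>(a :: nat \<Rightarrow> real) (b :: nat \<Rightarrow> complex). \<forall>k<d.
           (\<Sum>j<n. a j * of_int (u k j)) - lam1 k
              \<ge> cmod ((\<Sum>j<n. b j * of_int (u k j)) - (complex_of_real (lam2 k) + \<i> * complex_of_real (lam3 k)))
         \<and> (\<Sum>j<n. a j * of_int (u k j)) - lam1 k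
              = cmod ((\<Sum>j<n. b j * of_int (u k j)) - (complex_of_real (lam2 k) + \<i> * complex_of_real (lam3 k)))))
     \<and> (\<forall>p\<in>Z. over_fixed d n u p \<and> Nsp d n u p \<noteq> {((\<lambda>_. 0), (\<lambda>_. 0))} \<longrightarrow> \<not> condD d n u p)
     \<and> (n < d \<and> acts_freely d n u Z \<and> condS d n u Z \<longrightarrow>
          regular_on d n u Z \<and>
          (\<forall>p\<in>Z. over_fixed d n u p \<longrightarrow>
             induced_degenerate d n u Iop p \<and> induced_degenerate d n u Sop p
             \<and> induced_degenerate d n u Top p))"
proof -
  have mu: "p \<in> mu0 d n u lam1 lam2 lam3" if "p \<in> Z" for p using that by (simp add: Z_def)
  have C1: "(\<exists>p\<in>Z. over_fixed d n u p) \<longrightarrow>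
        (\<exists>(a :: nat \<Rightarrow> real) (b :: nat \<Rightarrow> complex). \<forall>k<d.
           (\<Sum>j<n. a j * of_int (u k j)) - lam1 k
              \<ge> cmod ((\<Sum>j<n. b j * of_int (u k j)) - (complex_of_real (lam2 k) + \<i> * complex_of_real (lam3 k)))
         \<and> (\<Sum>j<n. a j * of_int (u k j)) - lam1 k
              = cmod ((\<Sum>j<n. b j * of_int (u k j)) - (complex_of_real (lam2 k) + \<i> * complex_of_real (lam3 k))))"
  proof
    assume "\<exists>p\<in>Z. over_fixed d n u p"
    then obtain p where "p \<in> Z" "over_fixed d n u p" by blast
    then show "\<exists>(a :: nat \<Rightarrow> real) (b :: nat \<Rightarrow> complex). \<forall>k<d.
           (\<Sum>j<n. a j * of_int (u k j)) - lam1 k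
              \<ge> cmod ((\<Sum>j<n. b j * of_int (u k j)) - (complex_of_real (lam2 k) + \<i> * complex_of_real (lam3 k)))
         \<and> (\<Sum>j<n. a j * of_int (u k j)) - lam1 k
              = cmod ((\<Sum>j<n. b j * of_int (u k j)) - (complex_of_real (lam2 k) + \<i> * complex_of_real (lam3 k)))"
      using part1[OF mu] by blast
  qed
  have C2: "\<forall>p\<in>Z. over_fixed d n u p \<and> Nsp d n u p \<noteq> {((\<lambda>_. 0), (\<lambda>_. 0))} \<longrightarrow> \<not> condD d n u p"
    using part2 by blast
  have C3: "n < d \<and> acts_freely d n u Z \<and> condS d n u Z \<longrightarrow>
          regular_on d n u Z \<and>
          (\<forall>p\<in>Z. over_fixed d n u p \<longrightarrow>
             induced_degenerate d n u Iop p \<and> induced_degenerate d n u Sop p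
             \<and> induced_degenerate d n u Top p)"
  proof
    assume h: "n < d \<and> acts_freely d n u Z \<and> condS d n u Z"
    then have S: "condS d n u Z" by blast
    have "regular_on d n u Z" unfolding regular_on_def
    proof (intro ballI allI)
      fix p c1 c2 c3 assume pZ: "p \<in> Z"
      have pC: "p \<in> Cdd d" using mu[OF pZ] by (simp add: mu0_def)
      show "\<exists>v\<in>Cdd d. \<forall>\<xi>\<in>nfrak d n u.
          dmuI d p v \<xi> = (\<Sum>k<d. c1 k * \<xi> k) \<and>
          Re (dmuC d p v \<xi>) = (\<Sum>k<d. c2 k * \<xi> k) \<and>
          Im (dmuC d p v \<xi>) = (\<Sum>k<d. c3 k * \<xi> k)"
        by (rule part3_reg[OF S pZ pC])
    qed
    moreover have "\<forall>p\<in>Z. over_fixed d n u p \<longrightarrow>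
             induced_degenerate d n u Iop p \<and> induced_degenerate d n u Sop p
             \<and> induced_degenerate d n u Top p"
    proof (intro ballI impI)
      fix p assume pZ: "p \<in> Z" and fx: "over_fixed d n u p"
      obtain \<xi> where \<xi>: "\<xi> \<in> nfrak d n u" "\<xi> \<noteq> (\<lambda>_. 0)" using nfrak_nonzero h by blast
      show "induced_degenerate d n u Iop p \<and> induced_degenerate d n u Sop p
             \<and> induced_degenerate d n u Top p"
        by (rule part3_deg[OF pZ fx S \<xi>])
    qed
    ultimately show "regular_on d n u Z \<and>
          (\<forall>p\<in>Z. over_fixed d n u p \<longrightarrow>
             induced_degenerate d n u Iop p \<and> induced_degenerate d n u Sop p
             \<and> induced_degenerate d n u Top p)" by blast
  qed
  show ?thesis using C1 C2 C3 by blast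
qed

end
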